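(* Every embeddable graph is 4-colourable (in the usual sense of proper vertex colouring).
   Context: Let $\mathbb{H}^2=\{(x,y,z)\in\mathbb{R}^3 : x^2+y^2+z^2=1,\ z>0\}$ be the open northern hemisphere. A vector system is a finite subset of $\mathbb{H}^2$. A finite simple undirected graph $H=(V,E)$ is embeddable if there is an injective map $f:V\to\mathbb{H}^2$ such that $f(u)\cdot f(v)=0$ for every edge $\{u,v\}\in E$ (non-adjacent vertices may or may not be sent to orthogonal vectors, but distinct vertices must go to distinct vectors). *)

theory Defs
  imports "HOL-Analysis.Analysis"
begin

definition hemisphere :: "(real ^ 3) set" where
  "hemisphere = {v. norm v = 1 \<and> v $ 3 > 0}"

definition simple_graph :: "'a set \<Rightarrow> 'a set set \<Rightarrow> bool" where
  "simple_graph V E \<longleftrightarrow> finite V \<and> (\<forall>e\<in>E. e \<subseteq> V \<and> card e = 2)"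

definition embeddable :: "'a set \<Rightarrow> 'a set set \<Rightarrow> bool" where
  "embeddable V E \<longleftrightarrow> (\<exists>f. inj_on f V \<and> f ` V \<subseteq> hemisphere \<and>
      (\<forall>u v. {u, v} \<in> E \<longrightarrow> f u \<bullet> f v = 0))"

definition colourable :: "nat \<Rightarrow> 'a set \<Rightarrow> 'a set set \<Rightarrow> bool" where
  "colourable k V E \<longleftrightarrow> (\<exists>c :: 'a \<Rightarrow> nat. (\<forall>v\<in>V. c v < k) \<and>
      (\<forall>u v. {u, v} \<in> E \<longrightarrow> c u \<noteq> c v))"

end

theory Submission
  imports Defs
begin

lemma key:
  fixes a b :: "real ^ 3"
  assumes "a $ 3 > 0" "b $ 3 > 0"
    and "(a $ 1 > 0) = (b $ 1 > 0)" "(a $ 2 > 0) = (b $ 2 > 0)"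
  shows "a \<bullet> b > 0"
proof -
  have "a \<bullet> b = a$1 * b$1 + a$2 * b$2 + a$3 * b$3"
    by (simp add: inner_vec_def sum_3)
  moreover have "a$1 * b$1 \<ge> 0"
    using assms(3) by (cases "a$1 > 0") (auto intro: mult_nonneg_nonneg mult_nonpos_nonpos)
  moreover have "a$2 * b$2 \<ge> 0"
    using assms(4) by (cases "a$2 > 0") (auto intro: mult_nonneg_nonneg mult_nonpos_nonpos)
  moreover have "a$3 * b$3 > 0" using assms(1,2) by simp
  ultimately show ?thesis by linarith
qed

theorem mainTheorem1:
  fixes V :: "'a set" and E :: "'a set set"
  assumes "simple_graph V E" and "embeddable V E"
  shows "colourable 4 V E"
proof -
  obtain f where f: "f ` V \<subseteq> hemisphere" "\<And>u v. {u, v} \<in> E \<Longrightarrow> f u \<bullet> f v = 0"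
    using assms(2) unfolding embeddable_def by blast
  define c where "c v = (if f v $ 1 > 0 then 1 else 0) + (if f v $ 2 > 0 then 2 else (0::nat))" for v
  show ?thesis unfolding colourable_def
  proof (intro exI conjI allI impI)
    show "\<forall>v\<in>V. c v < 4" by (simp add: c_def)
  next
    fix u v assume e: "{u, v} \<in> E"
    then have "u \<in> V" "v \<in> V" using assms(1) unfolding simple_graph_def by auto
    then have h: "f u $ 3 > 0" "f v $ 3 > 0" using f(1) unfolding hemisphere_def by auto
    show "c u \<noteq> c v"
    proof
      assume "c u = c v"
      then have "(f u $ 1 > 0) = (f v $ 1 > 0)" "(f u $ 2 > 0) = (f v $ 2 > 0)"
        unfolding c_def by (auto split: if_splits)
      then have "f u \<bullet> f v > 0" using key h by blast
      with f(2)[OF e] show False by simp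
    qed
  qed
qed

end
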